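(* Let $H$ be an equibipartite tree on $2l$ vertices. If $H$ does not contain a perfect matching, then there exists a partition of $V(H)$ into two classes of different sizes such that the larger class induces no edges and the smaller class induces exactly one edge.
   Context: A tree is equibipartite if its two bipartition classes have the same size. *)

theory Defs
  imports Main
begin

definition simple_graph :: "'a set \<Rightarrow> 'a set set \<Rightarrow> bool" where
  "simple_graph V E \<longleftrightarrow> finite V \<and> (\<forall>e\<in>E. e \<subseteq> V \<and> card e = 2)"

definition adj :: "'a set set \<Rightarrow> 'a \<Rightarrow> 'a \<Rightarrow> bool" where
  "adj E u v \<longleftrightarrow> {u, v} \<in> E"

definition connected_graph :: "'a set \<Rightarrow> 'a set set \<Rightarrow> bool" where
  "connected_graph V E \<longleftrightarrow> (\<forall>u\<in>V. \<forall>v\<in>V. (adj E)\<^sup>*\<^sup>* u v)"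

definition is_cycle :: "'a set set \<Rightarrow> 'a list \<Rightarrow> bool" where
  "is_cycle E cs \<longleftrightarrow> length cs \<ge> 3 \<and> distinct cs \<and>
     (\<forall>i. Suc i < length cs \<longrightarrow> adj E (cs ! i) (cs ! Suc i)) \<and>
     adj E (last cs) (hd cs)"

definition acyclic_graph :: "'a set set \<Rightarrow> bool" where
  "acyclic_graph E \<longleftrightarrow> \<not> (\<exists>cs. is_cycle E cs)"

definition is_tree :: "'a set \<Rightarrow> 'a set set \<Rightarrow> bool" where
  "is_tree V E \<longleftrightarrow> simple_graph V E \<and> connected_graph V E \<and> acyclic_graph E"

definition bipartition :: "'a set \<Rightarrow> 'a set set \<Rightarrow> 'a set \<Rightarrow> 'a set \<Rightarrow> bool" where
  "bipartition V E A B \<longleftrightarrow> A \<union> B = V \<and> A \<inter> B = {} \<and>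
     (\<forall>e\<in>E. card (e \<inter> A) = 1 \<and> card (e \<inter> B) = 1)"

text \<open>Equibipartite: the two bipartition classes have the same size (for a tree
  the bipartition is unique up to swapping the classes).\<close>
definition equibipartite :: "'a set \<Rightarrow> 'a set set \<Rightarrow> bool" where
  "equibipartite V E \<longleftrightarrow> (\<exists>A B. bipartition V E A B \<and> card A = card B)"

definition perfect_matching :: "'a set \<Rightarrow> 'a set set \<Rightarrow> 'a set set \<Rightarrow> bool" where
  "perfect_matching V E M \<longleftrightarrow> M \<subseteq> E \<and>
     (\<forall>e1\<in>M. \<forall>e2\<in>M. e1 \<noteq> e2 \<longrightarrow> e1 \<inter> e2 = {}) \<and> \<Union>M = V"

definition induced_edges :: "'a set set \<Rightarrow> 'a set \<Rightarrow> 'a set set" where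
  "induced_edges E S = {e \<in> E. e \<subseteq> S}"

end

theory Submission
  imports Defs
begin

lemma adj_sym: "adj E x y = adj E y x" by (simp add: adj_def insert_commute)

lemma rtranclp_adj_sym: "(adj E)\<^sup>*\<^sup>* x y \<Longrightarrow> (adj E)\<^sup>*\<^sup>* y x"
proof (induction rule: rtranclp.induct)
  case (rtrancl_refl a) then show ?case by simp
next
  case (rtrancl_into_rtrancl a b c)
  then show ?case by (metis adj_sym converse_rtranclp_into_rtranclp)
qed

fun walk :: "('a \<Rightarrow> 'a \<Rightarrow> bool) \<Rightarrow> 'a list \<Rightarrow> bool" where
  "walk R [] = True"
| "walk R [x] = True"
| "walk R (x # y # xs) = (R x y \<and> walk R (y # xs))"

lemma walk_tl: "walk R (x # xs) \<Longrightarrow> walk R xs"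
  by (cases xs) auto

lemma walk_suffix: "walk R (xs @ ys) \<Longrightarrow> walk R ys"
  by (induction xs) (auto dest: walk_tl)

lemma walk_nth: "walk R xs \<Longrightarrow> Suc i < length xs \<Longrightarrow> R (xs!i) (xs!Suc i)"
proof (induction R xs arbitrary: i rule: walk.induct)
  case (3 R x y xs)
  then show ?case by (cases i) auto
qed auto

lemma distinct_walk: "R\<^sup>*\<^sup>* u v \<Longrightarrow> \<exists>xs. xs \<noteq> [] \<and> hd xs = u \<and> last xs = v \<and> distinct xs \<and> walk R xs"
proof (induction rule: converse_rtranclp_induct)
  case base
  then show ?case by (intro exI[of _ "[v]"]) auto
next
  case (step u w)
  then obtain xs where xs: "xs \<noteq> []" "hd xs = w" "last xs = v" "distinct xs" "walk R xs" by blast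
  show ?case
  proof (cases "u \<in> set xs")
    case True
    then obtain ys zs where yz: "xs = ys @ u # zs" by (meson split_list)
    show ?thesis
      apply (intro exI[of _ "u # zs"])
      using xs yz by (auto intro: walk_suffix)
  next
    case False
    obtain t where t: "xs = w # t" using xs by (cases xs) auto
    show ?thesis
      apply (intro exI[of _ "u # xs"])
      using xs t False step(1) by auto
  qed
qed

lemma bridge:
  assumes "acyclic_graph E" "{u,v} \<in> E" "u \<noteq> v"
  shows "\<not> (adj (E - {{u,v}}))\<^sup>*\<^sup>* u v"
proof
  assume "(adj (E - {{u,v}}))\<^sup>*\<^sup>* u v"
  then obtain xs where xs: "xs \<noteq> []" "hd xs = u" "last xs = v" "distinct xs"
      "walk (adj (E - {{u,v}})) xs" by (blast dest: distinct_walk)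
  obtain x1 r1 where r1: "xs = x1 # r1" using xs by (cases xs) auto
  have "length xs \<ge> 3"
  proof (cases r1)
    case Nil then show ?thesis using xs r1 assms by auto
  next
    case (Cons y r2)
    show ?thesis
    proof (cases r2)
      case Nil then show ?thesis using xs r1 Cons assms by (auto simp: adj_def)
    next
      case (Cons z r3) then show ?thesis using r1 \<open>r1 = y # r2\<close> by auto
    qed
  qed
  moreover have "\<forall>i. Suc i < length xs \<longrightarrow> adj E (xs ! i) (xs ! Suc i)"
    using walk_nth[OF xs(5)] by (auto simp: adj_def)
  moreover have "adj E (last xs) (hd xs)" using xs assms by (simp add: adj_def insert_commute)
  ultimately have "is_cycle E xs" using xs by (simp add: is_cycle_def)
  then show False using assms by (auto simp: acyclic_graph_def)
qed

locale tt =
  fixes V :: "'a set" and E :: "'a set set" and A B :: "'a set"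
  assumes tree: "is_tree V E" and bip: "bipartition V E A B" and eqc: "card A = card B"
begin

lemma finV: "finite V" using tree by (simp add: is_tree_def simple_graph_def)

lemma edge: "e \<in> E \<Longrightarrow> e \<subseteq> V \<and> card e = 2"
  using tree by (simp add: is_tree_def simple_graph_def)

lemma edge_ends: "{x,y} \<in> E \<Longrightarrow> x \<noteq> y \<and> x \<in> V \<and> y \<in> V"
  using edge[of "{x,y}"] by (cases "x = y") auto

lemma conn: "x \<in> V \<Longrightarrow> y \<in> V \<Longrightarrow> (adj E)\<^sup>*\<^sup>* x y"
  using tree by (simp add: is_tree_def connected_graph_def)

lemma acyc: "acyclic_graph E" using tree by (simp add: is_tree_def)

lemma AB: "A \<union> B = V" "A \<inter> B = {}" using bip by (auto simp: bipartition_def)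

lemma edge_AB: assumes "e \<in> E" shows "\<exists>p q. e = {p,q} \<and> p \<in> A \<and> q \<in> B \<and> q \<notin> A \<and> p \<notin> B"
proof -
  have c: "card (e \<inter> A) = 1" "card (e \<inter> B) = 1" using bip assms by (auto simp: bipartition_def)
  obtain p where p: "e \<inter> A = {p}" using c(1) card_1_singletonE by blast
  obtain q where q: "e \<inter> B = {q}" using c(2) card_1_singletonE by blast
  have "e \<subseteq> V" using edge assms by blast
  then have "e = (e \<inter> A) \<union> (e \<inter> B)" using AB(1) by blast
  then have e: "e = {p,q}" using p q by (simp add: insert_commute)
  have pA: "p \<in> A" using p by blast
  have qB: "q \<in> B" using q by blast
  have "q \<notin> A" "p \<notin> B" using pA qB AB(2) by blast+
  then show ?thesis using e pA qB by blast
qed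

lemma edge_A: assumes "{p,q} \<in> E" "p \<in> A" shows "q \<in> B \<and> q \<notin> A"
proof -
  obtain p' q' where pq: "{p,q} = {p',q'}" "p' \<in> A" "q' \<in> B" "q' \<notin> A" "p' \<notin> B"
    using edge_AB[OF assms(1)] by blast
  have "(p = p' \<and> q = q') \<or> (p = q' \<and> q = p')" using pq(1) by (simp add: doubleton_eq_iff)
  then show ?thesis using pq assms(2) by blast
qed

lemma edge_B: assumes "{p,q} \<in> E" "p \<notin> A" shows "q \<in> A"
proof -
  obtain p' q' where pq: "{p,q} = {p',q'}" "p' \<in> A" "q' \<in> B" "q' \<notin> A" "p' \<notin> B"
    using edge_AB[OF assms(1)] by blast
  have "(p = p' \<and> q = q') \<or> (p = q' \<and> q = p')" using pq(1) by (simp add: doubleton_eq_iff)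
  then show ?thesis using pq assms(2) by blast
qed

definition side :: "'a \<Rightarrow> 'a \<Rightarrow> 'a set" where
  "side u v = {x \<in> V. (adj (E - {{u,v}}))\<^sup>*\<^sup>* u x}"

lemma side_V: "side u v \<subseteq> V" by (auto simp: side_def)

lemma side_self: "{u,v} \<in> E \<Longrightarrow> u \<in> side u v"
  using edge_ends[of u v] by (auto simp: side_def)

lemma side_cover: assumes "{u,v} \<in> E" "x \<in> V" shows "x \<in> side u v \<or> x \<in> side v u"
proof -
  have uV: "u \<in> V" using edge_ends assms by blast
  have "(adj E)\<^sup>*\<^sup>* u x" using conn uV assms by blast
  then have "(adj (E - {{u,v}}))\<^sup>*\<^sup>* u x \<or> (adj (E - {{u,v}}))\<^sup>*\<^sup>* v x"
  proof (induction rule: rtranclp_induct)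
    case base then show ?case by simp
  next
    case (step y z)
    show ?case
    proof (cases "{y,z} = {u,v}")
      case True
      then have "z = u \<or> z = v" by (auto simp: doubleton_eq_iff)
      then show ?thesis by auto
    next
      case False
      then have "adj (E - {{u,v}}) y z" using step(2) by (auto simp: adj_def)
      then show ?thesis using step(3) by (meson rtranclp.rtrancl_into_rtrancl)
    qed
  qed
  moreover have "{v,u} = {u,v}" by auto
  ultimately show ?thesis using assms by (auto simp: side_def)
qed

lemma side_disj: assumes "{u,v} \<in> E" shows "side u v \<inter> side v u = {}"
proof (rule ccontr)
  assume "side u v \<inter> side v u \<noteq> {}"
  then obtain x where "x \<in> side u v" "x \<in> side v u" by blast
  moreover have "{v,u} = {u,v}" by auto
  ultimately have "(adj (E - {{u,v}}))\<^sup>*\<^sup>* u x" "(adj (E - {{u,v}}))\<^sup>*\<^sup>* v x"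
    by (auto simp: side_def)
  then have "(adj (E - {{u,v}}))\<^sup>*\<^sup>* u v" by (meson rtranclp_adj_sym rtranclp_trans)
  then show False using bridge[OF acyc assms] edge_ends[OF assms] by blast
qed

lemma side_union: "{u,v} \<in> E \<Longrightarrow> side u v \<union> side v u = V"
  using side_cover side_V by blast

lemma side_cross: assumes "{u,v} \<in> E" "{x,y} \<in> E" "x \<in> side u v" "y \<in> side v u"
  shows "{x,y} = {u,v}"
proof (rule ccontr)
  assume ne: "{x,y} \<noteq> {u,v}"
  then have "adj (E - {{u,v}}) x y" using assms(2) by (auto simp: adj_def)
  then have "y \<in> side u v" using assms(3) edge_ends[OF assms(2)]
    by (auto simp: side_def intro: rtranclp.rtrancl_into_rtrancl)
  then show False using side_disj[OF assms(1)] assms(4) by blast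
qed

definition N :: "'a \<Rightarrow> 'a set" where "N x = {y. {x,y} \<in> E}"

lemma N_V: "N x \<subseteq> V" using edge_ends by (auto simp: N_def)

lemma finN: "finite (N x)" using N_V finV finite_subset by blast

lemma nbr_cover: assumes "x \<in> V" shows "V - {x} = (\<Union>b\<in>N x. side b x)"
proof
  show "V - {x} \<subseteq> (\<Union>b\<in>N x. side b x)"
  proof
    fix z assume z: "z \<in> V - {x}"
    have "(adj E)\<^sup>*\<^sup>* x z" using conn assms z by blast
    then have "z = x \<or> (\<exists>b. {x,b} \<in> E \<and> (adj (E - {{b,x}}))\<^sup>*\<^sup>* b z)"
    proof (induction rule: rtranclp_induct)
      case base then show ?case by simp
    next
      case (step y w)
      from step(3) show ?case
      proof
        assume "y = x"
        then show ?thesis using step(2) by (auto simp: adj_def)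
      next
        assume "\<exists>b. {x,b} \<in> E \<and> (adj (E - {{b,x}}))\<^sup>*\<^sup>* b y"
        then obtain b where b: "{x,b} \<in> E" "(adj (E - {{b,x}}))\<^sup>*\<^sup>* b y" by blast
        show ?thesis
        proof (cases "{y,w} = {b,x}")
          case True
          then have "w = b \<or> w = x" by (auto simp: doubleton_eq_iff)
          then show ?thesis using b by auto
        next
          case False
          then have "adj (E - {{b,x}}) y w" using step(2) by (auto simp: adj_def)
          then show ?thesis using b by (meson rtranclp.rtrancl_into_rtrancl)
        qed
      qed
    qed
    then show "z \<in> (\<Union>b\<in>N x. side b x)" using z by (auto simp: side_def N_def)
  qed
next
  show "(\<Union>b\<in>N x. side b x) \<subseteq> V - {x}"
  proof
    fix z assume "z \<in> (\<Union>b\<in>N x. side b x)"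
    then obtain b where b: "{x,b} \<in> E" "z \<in> side b x" by (auto simp: N_def)
    have "{b,x} \<in> E" using b by (simp add: insert_commute)
    then have "x \<notin> side b x" using side_self[of x b] side_disj[of x b] b by blast
    then show "z \<in> V - {x}" using b side_V by blast
  qed
qed

lemma nbr_disj: assumes "b \<in> N x" "c \<in> N x" "b \<noteq> c" shows "side b x \<inter> side c x = {}"
proof (rule ccontr)
  assume "side b x \<inter> side c x \<noteq> {}"
  then obtain z where z: "z \<in> side b x" "z \<in> side c x" by blast
  have bx: "{b,x} \<in> E" "{x,b} \<in> E" "{c,x} \<in> E" "{x,c} \<in> E"
    using assms by (auto simp: N_def insert_commute)
  have cnot: "c \<notin> side x c" using side_self[OF bx(3)] side_disj[OF bx(4)] by blast
  have bin: "b \<in> side x c"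
  proof -
    have "adj (E - {{x,c}}) x b" using bx(2) assms(3) edge_ends[OF bx(2)]
      by (auto simp: adj_def doubleton_eq_iff)
    then show ?thesis using edge_ends[OF bx(2)] by (auto simp: side_def)
  qed
  have nob: "\<not> (adj (E - {{b,x}}))\<^sup>*\<^sup>* b x" using bridge[OF acyc bx(1)] edge_ends[OF bx(1)] by blast
  have "(adj (E - {{b,x}}))\<^sup>*\<^sup>* b z" using z by (auto simp: side_def)
  then have "z \<in> side x c"
  proof (induction rule: rtranclp_induct)
    case base then show ?case using bin by simp
  next
    case (step p q)
    have pq: "{p,q} \<in> E" using step(2) by (auto simp: adj_def)
    show ?case
    proof (rule ccontr)
      assume "q \<notin> side x c"
      then have "q \<in> side c x" using side_cover[OF bx(4)] edge_ends[OF pq] by blast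
      then have "{p,q} = {x,c}" using side_cross[OF bx(4) pq step(3)] by blast
      then have "p = x" using step(3) cnot by (auto simp: doubleton_eq_iff)
      then show False using step(1) nob by simp
    qed
  qed
  then show False using z(2) side_disj[OF bx(4)] by blast
qed

definition w :: "'a \<Rightarrow> int" where "w y = (if y \<in> A then 1 else -1)"
definition d :: "'a set \<Rightarrow> int" where "d S = sum w S"

lemma d_card: assumes "S \<subseteq> V" shows "d S = int (card (A \<inter> S)) - int (card (B \<inter> S))"
proof -
  have fin: "finite S" using assms finV finite_subset by blast
  have S: "S = (A \<inter> S) \<union> (B \<inter> S)" using assms AB(1) by blast
  have dj: "(A \<inter> S) \<inter> (B \<inter> S) = {}" using AB(2) by blast
  have "d S = sum w (A \<inter> S) + sum w (B \<inter> S)"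
    unfolding d_def using sum.union_disjoint[of "A \<inter> S" "B \<inter> S" w] fin dj S by simp
  moreover have "sum w (A \<inter> S) = int (card (A \<inter> S))" by (simp add: w_def)
  moreover have "sum w (B \<inter> S) = - int (card (B \<inter> S))"
  proof -
    have "sum w (B \<inter> S) = sum (\<lambda>_. -1) (B \<inter> S)"
      using AB(2) by (intro sum.cong) (auto simp: w_def)
    then show ?thesis by simp
  qed
  ultimately show ?thesis by simp
qed

lemma dV: "d V = 0"
proof -
  have "A \<inter> V = A" "B \<inter> V = B" using AB(1) by blast+
  then show ?thesis using d_card[of V] eqc by simp
qed

lemma d_split: assumes "{u,v} \<in> E" shows "d (side u v) + d (side v u) = 0"
proof -
  have "finite (side u v)" "finite (side v u)" using side_V finV finite_subset by blast+
  then have "d (side u v \<union> side v u) = d (side u v) + d (side v u)"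
    unfolding d_def using side_disj[OF assms] by (simp add: sum.union_disjoint)
  then show ?thesis using side_union[OF assms] dV by simp
qed

lemma d_vertex: assumes "x \<in> V" shows "(\<Sum>b\<in>N x. d (side b x)) = - w x"
proof -
  have "d (V - {x}) = - w x" unfolding d_def using sum_diff1[OF finV, of w x] assms dV
    by (simp add: d_def)
  moreover have "d (V - {x}) = (\<Sum>b\<in>N x. d (side b x))"
    unfolding nbr_cover[OF assms] d_def
  proof (rule sum.UNION_disjoint)
    show "finite (N x)" by (rule finN)
    show "\<forall>i\<in>N x. finite (side i x)" using finite_subset[OF side_V finV] by blast
    show "\<forall>i\<in>N x. \<forall>j\<in>N x. i \<noteq> j \<longrightarrow> side i x \<inter> side j x = {}"
      using nbr_disj by blast
  qed
  ultimately show ?thesis by simp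
qed

end

lemma sum_one_unique:
  fixes f :: "'b \<Rightarrow> int"
  assumes "finite S" "\<forall>y\<in>S. f y \<ge> 0" "sum f S = 1"
  shows "\<exists>y\<in>S. f y = 1" "\<And>y z. y \<in> S \<Longrightarrow> z \<in> S \<Longrightarrow> f y = 1 \<Longrightarrow> f z = 1 \<Longrightarrow> y = z"
proof -
  have le: "f y \<le> 1" if "y \<in> S" for y
  proof -
    have "f y \<le> sum f S" by (rule member_le_sum) (use that assms in auto)
    then show ?thesis using assms(3) by simp
  qed
  show "\<exists>y\<in>S. f y = 1"
  proof (rule ccontr)
    assume "\<not> (\<exists>y\<in>S. f y = 1)"
    then have "\<forall>y\<in>S. f y = 0" using le assms(2) by force
    then have "sum f S = 0" by simp
    then show False using assms by simp
  qed
  fix y z assume yz: "y \<in> S" "z \<in> S" "f y = 1" "f z = 1"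
  show "y = z"
  proof (rule ccontr)
    assume "y \<noteq> z"
    then have "sum f {y,z} = 2" using yz by simp
    moreover have "sum f {y,z} \<le> sum f S"
      by (rule sum_mono2) (use yz assms in auto)
    ultimately show False using assms by simp
  qed
qed

theorem mainTheorem7:
  fixes V :: "'a set" and E :: "'a set set" and l :: nat
  assumes "is_tree V E"
    and "equibipartite V E"
    and "card V = 2 * l"
    and "\<not> (\<exists>M. perfect_matching V E M)"
  shows "\<exists>X Y. X \<union> Y = V \<and> X \<inter> Y = {} \<and> card X > card Y \<and>
           induced_edges E X = {} \<and> card (induced_edges E Y) = 1"
proof -
  obtain A B where hAB: "bipartition V E A B" "card A = card B"
    using assms(2) by (auto simp: equibipartite_def)
  interpret tt V E A B using assms(1) hAB by unfold_locales
  show ?thesis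
  proof (cases "\<exists>u v. {u,v} \<in> E \<and> u \<in> A \<and> d (side u v) < 0")
    case True
    then obtain u v where uv: "{u,v} \<in> E" "u \<in> A" "d (side u v) < 0" by blast
    have vu: "{v,u} \<in> E" using uv by (simp add: insert_commute)
    have vB: "v \<in> B" "v \<notin> A" using edge_A[OF uv(1,2)] by auto
    define Q where "Q = side u v"
    define P where "P = side v u"
    have PQ: "P \<union> Q = V" "P \<inter> Q = {}" using side_union[OF uv(1)] side_disj[OF uv(1)]
      unfolding P_def Q_def by blast+
    have uQ: "u \<in> Q" and vP: "v \<in> P" using side_self[OF uv(1)] side_self[OF vu]
      unfolding P_def Q_def by auto
    have QV: "Q \<subseteq> V" and PV: "P \<subseteq> V" using PQ by blast+
    have cross: "\<And>x y. {x,y} \<in> E \<Longrightarrow> x \<in> Q \<Longrightarrow> y \<in> P \<Longrightarrow> {x,y} = {u,v}"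
      using side_cross[OF uv(1)] unfolding P_def Q_def by blast
    define X where "X = (A \<inter> P) \<union> (B \<inter> Q)"
    define Y where "Y = (B \<inter> P) \<union> (A \<inter> Q)"
    have finA: "finite A" "finite B" using hAB(1) finV finite_subset unfolding bipartition_def by blast+
    have c1: "card X = card (A \<inter> P) + card (B \<inter> Q)"
      unfolding X_def using finA AB(2) by (intro card_Un_disjoint) auto
    have c2: "card Y = card (B \<inter> P) + card (A \<inter> Q)"
      unfolding Y_def using finA AB(2) by (intro card_Un_disjoint) auto
    have c3: "card A = card (A \<inter> P) + card (A \<inter> Q)"
    proof -
      have "A = (A \<inter> P) \<union> (A \<inter> Q)" using PQ AB(1) by blast
      then have "card A = card ((A \<inter> P) \<union> (A \<inter> Q))" by simp
      also have "\<dots> = card (A \<inter> P) + card (A \<inter> Q)"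
        using finA PQ by (intro card_Un_disjoint) auto
      finally show ?thesis .
    qed
    have c4: "card B = card (B \<inter> P) + card (B \<inter> Q)"
    proof -
      have "B = (B \<inter> P) \<union> (B \<inter> Q)" using PQ AB(1) by blast
      then have "card B = card ((B \<inter> P) \<union> (B \<inter> Q))" by simp
      also have "\<dots> = card (B \<inter> P) + card (B \<inter> Q)"
        using finA PQ by (intro card_Un_disjoint) auto
      finally show ?thesis .
    qed
    have c5: "card (A \<inter> Q) < card (B \<inter> Q)" using d_card[OF QV] uv(3) unfolding Q_def by simp
    have "card X > card Y" using c1 c2 c3 c4 c5 hAB(2) by linarith
    moreover have "X \<union> Y = V" unfolding X_def Y_def using PQ AB by blast
    moreover have "X \<inter> Y = {}" unfolding X_def Y_def using PQ AB by blast
    moreover have "induced_edges E X = {}"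
    proof (rule ccontr)
      assume "induced_edges E X \<noteq> {}"
      then obtain e where e: "e \<in> E" "e \<subseteq> X" by (auto simp: induced_edges_def)
      then obtain p q where pq: "e = {p,q}" "p \<in> A" "q \<in> B" "q \<notin> A" "p \<notin> B" using edge_AB by blast
      have "p \<in> P" "q \<in> Q" using e pq unfolding X_def by auto
      then have "{q,p} = {u,v}" using cross[of q p] e pq by (simp add: insert_commute)
      then have "p = u" using pq uv vB by (auto simp: doubleton_eq_iff)
      then show False using \<open>p \<in> P\<close> uQ PQ by blast
    qed
    moreover have "induced_edges E Y = {{u,v}}"
    proof
      show "{{u,v}} \<subseteq> induced_edges E Y"
        using uv vB uQ vP unfolding induced_edges_def Y_def by auto
      show "induced_edges E Y \<subseteq> {{u,v}}"
      proof
        fix e assume "e \<in> induced_edges E Y"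
        then have e: "e \<in> E" "e \<subseteq> Y" by (auto simp: induced_edges_def)
        then obtain p q where pq: "e = {p,q}" "p \<in> A" "q \<in> B" "q \<notin> A" "p \<notin> B" using edge_AB by blast
        have "p \<in> Q" "q \<in> P" using e pq unfolding Y_def by auto
        then show "e \<in> {{u,v}}" using cross[of p q] e pq by simp
      qed
    qed
    ultimately show ?thesis by (intro exI[of _ X] exI[of _ Y]) simp
  next
    case False
    then have nonneg: "\<And>u v. {u,v} \<in> E \<Longrightarrow> u \<in> A \<Longrightarrow> d (side u v) \<ge> 0" by force
    define val where "val x y = (if x \<in> A then d (side x y) else d (side y x))" for x y
    have vals: "\<forall>y\<in>N x. val x y \<ge> 0" "sum (val x) (N x) = 1" if xV: "x \<in> V" for x
    proof -
      show "\<forall>y\<in>N x. val x y \<ge> 0"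
      proof
        fix y assume "y \<in> N x"
        then have xy: "{x,y} \<in> E" "{y,x} \<in> E" by (auto simp: N_def insert_commute)
        show "val x y \<ge> 0"
        proof (cases "x \<in> A")
          case True then show ?thesis using nonneg[OF xy(1)] by (simp add: val_def)
        next
          case False
          then have "y \<in> A" using edge_B[OF xy(1)] by blast
          then show ?thesis using nonneg[OF xy(2)] False by (simp add: val_def)
        qed
      qed
      show "sum (val x) (N x) = 1"
      proof (cases "x \<in> A")
        case True
        have "sum (val x) (N x) = (\<Sum>b\<in>N x. - d (side b x))"
        proof (rule sum.cong)
          fix b assume "b \<in> N x"
          then have "{x,b} \<in> E" by (auto simp: N_def)
          then show "val x b = - d (side b x)" using d_split True by (simp add: val_def eq_neg_iff_add_eq_0)
        qed simp
        also have "\<dots> = - (\<Sum>b\<in>N x. d (side b x))" by (simp add: sum_negf)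
        also have "\<dots> = 1" using d_vertex[OF xV] True by (simp add: w_def)
        finally show ?thesis .
      next
        case False
        have "sum (val x) (N x) = (\<Sum>b\<in>N x. d (side b x))"
          using False by (intro sum.cong) (auto simp: val_def)
        also have "\<dots> = 1" using d_vertex[OF xV] False by (simp add: w_def)
        finally show ?thesis .
      qed
    qed
    have ex1: "\<exists>y\<in>N x. val x y = 1" if "x \<in> V" for x
      using sum_one_unique(1)[OF finN vals[OF that]] .
    have uniq: "\<And>y z. x \<in> V \<Longrightarrow> y \<in> N x \<Longrightarrow> z \<in> N x \<Longrightarrow> val x y = 1 \<Longrightarrow> val x z = 1 \<Longrightarrow> y = z"
      for x using sum_one_unique(2)[OF finN vals] by blast
    define M where "M = {e \<in> E. \<exists>p q. e = {p,q} \<and> p \<in> A \<and> d (side p q) = 1}"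
    have inM: "\<exists>y. e = {x,y} \<and> y \<in> N x \<and> val x y = 1" if eM: "e \<in> M" and xe: "x \<in> e" for e x
    proof -
      obtain p q where pq: "e \<in> E" "e = {p,q}" "p \<in> A" "d (side p q) = 1"
        using eM unfolding M_def by blast
      have qA: "q \<notin> A" using edge_A pq by blast
      show ?thesis
      proof (cases "x = p")
        case True
        then show ?thesis using pq by (auto simp: N_def val_def)
      next
        case False
        then have "x = q" using xe pq by blast
        then show ?thesis using pq qA by (auto simp: N_def val_def insert_commute)
      qed
    qed
    have toM: "{x,y} \<in> M" if "y \<in> N x" "val x y = 1" for x y
    proof (cases "x \<in> A")
      case True
      then show ?thesis using that unfolding M_def by (auto simp: N_def val_def)
    next
      case False
      have xy: "{x,y} \<in> E" using that by (simp add: N_def)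
      then have "y \<in> A" using edge_B False by blast
      have "d (side y x) = 1" using that False by (simp add: val_def)
      moreover have "{y,x} \<in> E" using xy by (simp add: insert_commute)
      ultimately have "{y,x} \<in> M" using \<open>y \<in> A\<close> unfolding M_def by blast
      then show ?thesis by (simp add: insert_commute)
    qed
    have "perfect_matching V E M"
      unfolding perfect_matching_def
    proof (intro conjI ballI impI)
      show "M \<subseteq> E" by (auto simp: M_def)
    next
      fix e1 e2 assume e: "e1 \<in> M" "e2 \<in> M" "e1 \<noteq> e2"
      show "e1 \<inter> e2 = {}"
      proof (rule ccontr)
        assume "e1 \<inter> e2 \<noteq> {}"
        then obtain x where x: "x \<in> e1" "x \<in> e2" by blast
        obtain y1 where y1: "e1 = {x,y1}" "y1 \<in> N x" "val x y1 = 1" using inM e(1) x(1) by blast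
        obtain y2 where y2: "e2 = {x,y2}" "y2 \<in> N x" "val x y2 = 1" using inM e(2) x(2) by blast
        have "x \<in> V" using y1 edge_ends by (auto simp: N_def)
        then have "y1 = y2" using uniq y1 y2 by blast
        then show False using y1 y2 e by simp
      qed
    next
      show "\<Union>M = V"
      proof
        show "\<Union>M \<subseteq> V" using edge unfolding M_def by blast
        show "V \<subseteq> \<Union>M"
        proof
          fix x assume "x \<in> V"
          then obtain y where "y \<in> N x" "val x y = 1" using ex1 by blast
          then have "{x,y} \<in> M" using toM by blast
          then show "x \<in> \<Union>M" by blast
        qed
      qed
    qed
    then show ?thesis using assms(4) by blast
  qed
qed

end
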